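(* For each $k\ge0$ and each index $\alpha$, let $$\mathcal G_{k,\alpha}:=\Big\langle\mathcal O^{(k)}_\alpha\exp\Big(\sum_\beta\lambda^\beta_0\mathcal O_\beta\Big)\Big\rangle_0\in\mathbb C[[\lambda^\alpha_0]].$$ Then the current observables $\oint_C\mathscr J^{(1)}_{\mathcal G_{k,\alpha}}$ mutually commute with respect to $\{-,-\}_C$: $$\Big\{\oint_C\mathscr J^{(1)}_{\mathcal G_{k,\alpha}},\oint_C\mathscr J^{(1)}_{\mathcal G_{m,\beta}}\Big\}_C=0\quad\text{for all }k,m\ge0\text{ and all }\alpha,\beta.$$
   Context: Genus zero data: $H$ finite-dimensional purely even complex vector space with basis $\{\mathcal O_\alpha\}$, distinguished $P=\mathcal O_1$, $\mathcal O^{(k)}_\alpha=t^k\mathcal O_\alpha$ ($t$ formal); symmetric multilinear genus zero correlators $\langle\mathcal O^{(k_1)}_{\alpha_1}\cdots\mathcal O^{(k_n)}_{\alpha_n}\rangle_0\in\mathbb C$ vanishing for $n<3$, with $g_{\alpha\beta}=\langle\mathcal O_\alpha\mathcal O_\beta P\rangle_0$ nondegenerate (inverse $g^{\alpha\beta}$, used to raise indices: $\mathcal O^{(k)\alpha}=\sum_\beta g^{\alpha\beta}\mathcal O^{(k)}_\beta$), satisfying the genus zero topological recursion relation $\langle\langle\mathcal O^{(i+1)}_\alpha\mathcal O^{(j)}_\beta\mathcal O^{(k)}_\gamma\rangle\rangle_0=\sum_\sigma\langle\langle\mathcal O^{(i)}_\alpha\mathcal O^{(0)\sigma}\rangle\rangle_0\langle\langle\mathcal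 O^{(0)}_\sigma\mathcal O^{(j)}_\beta\mathcal O^{(k)}_\gamma\rangle\rangle_0$, where $\langle\langle\cdots\rangle\rangle_0(\mathbf b)=\langle\cdots e^{\sum b^\alpha_k\mathcal O^{(k)}_\alpha}\rangle_0$ is a formal power series in coordinates $b^\alpha_k$. In $\mathcal G_{k,\alpha}$ the exponential is expanded and the correlator applied multilinearly. Setting on $\mathbb C^\times=\mathbb C/(z\sim z+1)$ with form $dz$: fields $\mathcal E^H=(\mathrm{PV}(\mathbb C^\times)\otimes H)[[t]]$ ($t$ of degree 2, $\mathrm{PV}^{i,j}=\Omega^{0,j}(\wedge^iT^{1,0})$ in degree $i+j$), $\mu=\sum(\lambda^\alpha_k\otimes\mathcal O_\alpha t^k+\rho^\alpha_k\partial_z\otimes\mathcal O_\alpha t^k)$, $\lambda^\alpha_k,\rho^\alpha_k\in\Omega^{0,\bullet}(\mathbb C^\times)$. Trace $\mathrm{Tr}(\mu)=\int(\mu\vdash dz)\wedge dz$; BV kernel $K_0=\sum_\alpha(\mathcal O^\alpha\otimes\mathcal O_\alpha)\partial_z\delta(z-w)(d\bar z-d\bar w)$. $\mathbb C[[\partial_z^m\lambda^\alpha_k,\partial_z^m\rho^\alpha_k]]$: formal power series in even $\partial_z^m\lambda^\alpha_k$ and odd $\partial_z^m\rho^\alpha_k$, with derivation $\partial_z$ raising $m$. For such $\mathcal L$, $\mathscr J_{\mathcal L}=dz\,\mathcal L(\partial_z^m\lambda^\alpha_k,\partial_z^m\rho^\alpha_k)$ (an $\Omega^{\bullet,\bullet}(\mathbb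 C^\times)$-valued function on fields obtained by substitution), with 1-form and 2-form parts $\mathscr J^{(1)}_{\mathcal L},\mathscr J^{(2)}_{\mathcal L}$; $C=\{z\in[0,1]\}$. The bracket is $\{\oint_C\mathscr J^{(1)}_{\mathcal L_1},\oint_C\mathscr J^{(1)}_{\mathcal L_2}\}_C:=\{\int_{\mathbb C^\times}\mathscr J^{(2)}_{\mathcal L_1},\oint_C\mathscr J^{(1)}_{\mathcal L_2}\}_{BV}$, where $\{S,\mathcal O\}_{BV}$ is the derivative of the observable $\mathcal O$ along the field transformation obtained by contracting $K_0$ with the functional derivative of the local functional $S$; concretely it equals $\oint_C\mathscr J^{(1)}_{[\mathcal L_1,\mathcal L_2]}$ with $[\mathcal L_1,\mathcal L_2]=\sum_{\alpha,\beta,k,m}\{(-\partial_z)^k\frac{\partial\mathcal L_1}{\partial(\partial_z^k\lambda^\alpha_0)}\}g^{\alpha\beta}\partial_z\{(-\partial_z)^m\frac{\partial\mathcal L_2}{\partial(\partial_z^m\lambda^\beta_0)}\}$. *)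

theory Defs
  imports "HOL-Analysis.Analysis" "HOL-Library.Multiset"
begin

text \<open>The index set of the basis O_alpha of H is a finite type 'i.
  A basis insertion O_alpha^(k) is the pair (alpha, k). By symmetry and multilinearity,
  the genus zero correlators are determined by their values on multisets of basis
  insertions: corr X = < prod_{(alpha,k) in X} O_alpha^(k) >_0.\<close>

definition mfact :: "'a multiset \<Rightarrow> complex" where
  "mfact M = (\<Prod>x\<in>set_mset M. of_nat (fact (count M x)))"

text \<open>Formal power series in commuting variables indexed by 'a, represented by
  their coefficient functions on monomials (monomials = finite multisets of variables).\<close>

definition pmul :: "('a multiset \<Rightarrow> complex) \<Rightarrow> ('a multiset \<Rightarrow> complex) \<Rightarrow> 'a multiset \<Rightarrow> complex" where
  "pmul F G M = (\<Sum>N\<in>{N. N \<subseteq># M}. F N * G (M - N))"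

text \<open>Generating series << X >>_0 (b) in the coordinates b^alpha_k:
  coefficient of b^M is corr (X + M) / M!.\<close>

definition gen :: "(('i \<times> nat) multiset \<Rightarrow> complex) \<Rightarrow> ('i \<times> nat) multiset
                     \<Rightarrow> ('i \<times> nat) multiset \<Rightarrow> complex" where
  "gen corr X M = corr (X + M) / mfact M"

definition metric :: "(('i::finite \<times> nat) multiset \<Rightarrow> complex) \<Rightarrow> 'i \<Rightarrow> complex^'i^'i" where
  "metric corr P = (\<chi> a b. corr {#(a,0), (b,0), (P,0)#})"

definition metric_inv :: "(('i::finite \<times> nat) multiset \<Rightarrow> complex) \<Rightarrow> 'i \<Rightarrow> complex^'i^'i" where
  "metric_inv corr P = matrix_inv (metric corr P)"

definition TRR :: "(('i::finite \<times> nat) multiset \<Rightarrow> complex) \<Rightarrow> 'i \<Rightarrow> bool" where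
  "TRR corr P \<longleftrightarrow>
    (\<forall>a b c i j k M.
       gen corr {#(a, Suc i), (b, j), (c, k)#} M =
       (\<Sum>s\<in>UNIV. \<Sum>t\<in>UNIV. metric_inv corr P $ s $ t *
           pmul (gen corr {#(a, i), (t, 0)#}) (gen corr {#(s, 0), (b, j), (c, k)#}) M))"

text \<open>Jet variables: (m, alpha, k) stands for the even variable d_z^m lambda^alpha_k.
  A jet series is a formal power series in these variables.\<close>

type_synonym 'i jetser = "(nat \<times> 'i \<times> nat) multiset \<Rightarrow> complex"

definition wt :: "(nat \<times> 'i \<times> nat) multiset \<Rightarrow> nat" where
  "wt M = sum_mset (image_mset fst M)"

text \<open>The total derivative d_z: the derivation sending d_z^m lambda^alpha_k to
  d_z^(m+1) lambda^alpha_k, given by its coefficients.\<close>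
definition Dz :: "'i jetser \<Rightarrow> 'i jetser" where
  "Dz F M = (\<Sum>w\<in>{w\<in>set_mset M. 0 < fst w}.
      let v = (fst w - 1, snd w); N = add_mset v (M - {#w#})
      in of_nat (count N v) * F N)"

definition pd :: "(nat \<times> 'i \<times> nat) \<Rightarrow> 'i jetser \<Rightarrow> 'i jetser" where
  "pd v F M = of_nat (count M v + 1) * F (add_mset v M)"

definition negDz :: "nat \<Rightarrow> 'i jetser \<Rightarrow> 'i jetser" where
  "negDz n F = ((\<lambda>G M. - Dz G M) ^^ n) F"

text \<open>The sum over k, m is locally finite:
   at a monomial M only terms with k, m <= wt M contribute (d_z raises weight by one),
   so the truncation below is exact.\<close>
definition cbracket :: "complex^'i^'i \<Rightarrow> 'i::finite jetser \<Rightarrow> 'i jetser \<Rightarrow> 'i jetser" where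
  "cbracket gi L1 L2 M =
     (\<Sum>k\<in>{..wt M}. \<Sum>m\<in>{..wt M}. \<Sum>a\<in>UNIV. \<Sum>b\<in>UNIV.
        gi $ a $ b * pmul (negDz k (pd (k, a, 0) L1)) (Dz (negDz m (pd (m, b, 0) L2))) M)"

text \<open>G_{k,alpha} = < O_alpha^(k) exp(sum_beta lambda^beta_0 O_beta) >_0 as a jet series
  depending only on the variables lambda^beta_0 = (0, beta, 0).\<close>
definition Gser :: "(('i \<times> nat) multiset \<Rightarrow> complex) \<Rightarrow> nat \<Rightarrow> 'i \<Rightarrow> 'i jetser" where
  "Gser corr k a M =
     (if \<forall>x\<in>#M. fst x = 0 \<and> snd (snd x) = 0
      then corr (add_mset (a, k) (image_mset (\<lambda>x. (fst (snd x), 0)) M)) / mfact M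
      else 0)"

text \<open>The current observable (contour integral over C of J^(1)_L) vanishes:
  L is a total z-derivative (local functionals modulo total derivatives).\<close>
definition current_vanishes :: "'i jetser \<Rightarrow> bool" where
  "current_vanishes L \<longleftrightarrow> (\<exists>H. L = Dz H)"

end

theory Submission
  imports Defs
begin

definition allx :: "(nat \<times> 'i \<times> nat) multiset \<Rightarrow> bool" where
  "allx M \<longleftrightarrow> (\<forall>x\<in>#M. fst x = 0 \<and> snd (snd x) = 0)"

definition prj :: "(nat \<times> 'i \<times> nat) \<Rightarrow> ('i \<times> nat)" where
  "prj x = (fst (snd x), 0)"

definition lft :: "(('i \<times> nat) multiset \<Rightarrow> complex) \<Rightarrow> 'i jetser" where
  "lft S M = (if allx M then S (image_mset prj M) else 0)"

definition pdp :: "'i \<Rightarrow> (('i \<times> nat) multiset \<Rightarrow> complex) \<Rightarrow> ('i \<times> nat) multiset \<Rightarrow> complex" where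
  "pdp c S K = of_nat (count K (c,0) + 1) * S (add_mset (c,0) K)"

definition oney :: "(nat \<times> 'i \<times> nat) multiset \<Rightarrow> 'i \<times> (nat \<times> 'i \<times> nat) multiset \<Rightarrow> bool" where
  "oney M p \<longleftrightarrow> M = add_mset (1, fst p, 0) (snd p) \<and> allx (snd p)"

definition lft1 :: "('i \<Rightarrow> ('i \<times> nat) multiset \<Rightarrow> complex) \<Rightarrow> 'i jetser" where
  "lft1 T M = (if \<exists>p. oney M p then T (fst (SOME p. oney M p)) (image_mset prj (snd (SOME p. oney M p))) else 0)"

lemma allx_add[simp]: "allx (add_mset x M) \<longleftrightarrow> fst x = 0 \<and> snd (snd x) = 0 \<and> allx M"
  by (auto simp: allx_def)

lemma allx_union[simp]: "allx (M + N) \<longleftrightarrow> allx M \<and> allx N"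
  by (auto simp: allx_def)

lemma allx_sub: "allx M \<Longrightarrow> N \<subseteq># M \<Longrightarrow> allx N"
  by (auto simp: allx_def dest: mset_subset_eqD)

lemma oney_unique:
  assumes "oney M p" "oney M q" shows "p = q"
proof -
  obtain c M0 where p: "p = (c, M0)" by (cases p)
  obtain d M1 where q: "q = (d, M1)" by (cases q)
  have e: "add_mset (1, c, 0) M0 = add_mset (1, d, 0) M1" and a0: "allx M0" and a1: "allx M1"
    using assms p q by (auto simp: oney_def)
  have "c = d"
  proof (rule ccontr)
    assume "c \<noteq> d"
    then have "(1, c, 0) \<in># M1" using e
      by (metis add_mset_remove_trivial_If insert_noteq_member prod.inject union_single_eq_member)
    then show False using a1 by (auto simp: allx_def)
  qed
  then show ?thesis using e p q by simp
qed

lemma lft1_eq: "allx M0 \<Longrightarrow> lft1 T (add_mset (1, c, 0) M0) = T c (image_mset prj M0)"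
proof -
  assume a: "allx M0"
  have o: "oney (add_mset (1, c, 0) M0) (c, M0)" using a by (simp add: oney_def)
  then have "(SOME p. oney (add_mset (1, c, 0) M0) p) = (c, M0)"
    by (metis oney_unique someI_ex)
  then show ?thesis using o unfolding lft1_def by auto
qed

lemma lft1_eq1[simp]: "allx M0 \<Longrightarrow> lft1 T (add_mset (Suc 0, c, 0) M0) = T c (image_mset prj M0)"
  using lft1_eq by (metis One_nat_def)

lemma lft1_zero: "\<not> (\<exists>c M0. M = add_mset (1, c, 0) M0 \<and> allx M0) \<Longrightarrow> lft1 T M = 0"
  unfolding lft1_def oney_def by force

lemma lft1_nz: "lft1 T M \<noteq> 0 \<Longrightarrow> \<exists>c M0. M = add_mset (1, c, 0) M0 \<and> allx M0"
  using lft1_zero by blast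

lemma count_prj: "allx M \<Longrightarrow> count (image_mset prj M) (c, 0) = count M (0, c, 0)"
  by (induction M) (auto simp: prj_def)

lemma mfact_gen: "finite A \<Longrightarrow> set_mset M \<subseteq> A \<Longrightarrow> mfact M = (\<Prod>x\<in>A. of_nat (fact (count M x)))"
  unfolding mfact_def
  by (rule prod.mono_neutral_left) (auto simp: not_in_iff)

lemma mfact_add: "mfact (add_mset x M) = of_nat (count M x + 1) * mfact M"
proof -
  let ?A = "insert x (set_mset M)"
  have f: "finite ?A" by simp
  have "mfact (add_mset x M) = (\<Prod>y\<in>?A. of_nat (fact (count (add_mset x M) y)))"
    by (rule mfact_gen) auto
  also have "\<dots> = of_nat (fact (count M x + 1)) * (\<Prod>y\<in>?A - {x}. of_nat (fact (count (add_mset x M) y)))"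
    using f by (subst prod.remove[of _ x]) auto
  also have "(\<Prod>y\<in>?A - {x}. of_nat (fact (count (add_mset x M) y))) = (\<Prod>y\<in>?A - {x}. (of_nat (fact (count M y)) :: complex))"
    by (rule prod.cong) auto
  also have "mfact M = (\<Prod>y\<in>?A. of_nat (fact (count M y)))"
    by (rule mfact_gen) auto
  hence "mfact M = of_nat (fact (count M x)) * (\<Prod>y\<in>?A - {x}. (of_nat (fact (count M y)) :: complex))"
    using f by (subst (asm) prod.remove[of _ x]) auto
  ultimately show ?thesis by (simp add: algebra_simps)
qed

lemma mfact_prj: "allx M \<Longrightarrow> mfact (image_mset prj M) = mfact M"
proof (induction M)
  case empty
  then show ?case by (simp add: mfact_def)
next
  case (add x M)
  then have aM: "allx M" and x0: "fst x = 0" "snd (snd x) = 0" by auto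
  obtain d where x: "x = (0, d, 0)" using x0 by (metis prod.collapse)
  have "mfact (image_mset prj (add_mset x M)) = mfact (add_mset (d,0) (image_mset prj M))"
    by (simp add: x prj_def)
  also have "\<dots> = of_nat (count M (0,d,0) + 1) * mfact (image_mset prj M)"
    by (simp only: mfact_add count_prj[OF aM])
  also have "\<dots> = mfact (add_mset x M)"
    using add.IH aM by (simp add: mfact_add x)
  finally show ?case .
qed


lemma finite_submsets: "finite {N. N \<subseteq># (M::'a multiset)}"
proof (induction M)
  case empty
  then show ?case by simp
next
  case (add x M)
  have "{N. N \<subseteq># add_mset x M} \<subseteq> {N. N \<subseteq># M} \<union> add_mset x ` {N. N \<subseteq># M}"
  proof
    fix N assume "N \<in> {N. N \<subseteq># add_mset x M}"
    then have N: "N \<subseteq># add_mset x M" by simp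
    show "N \<in> {N. N \<subseteq># M} \<union> add_mset x ` {N. N \<subseteq># M}"
    proof (cases "x \<in># N")
      case True
      then have "N = add_mset x (N - {#x#})" by simp
      moreover have "N - {#x#} \<subseteq># M" using N True
        by (metis add_mset_remove_trivial insert_DiffM diff_subset_eq_self subset_mset.le_less mset_subset_eq_add_mset_cancel)
      ultimately show ?thesis by blast
    next
      case False
      then have "N \<subseteq># M" using N by (metis Diff_eq_empty_iff_mset minus_add_mset_if_not_in_lhs)
      then show ?thesis by simp
    qed
  qed
  moreover have "finite ({N. N \<subseteq># M} \<union> add_mset x ` {N. N \<subseteq># M})" using add by simp
  ultimately show ?case by (rule finite_subset)
qed

lemma Dz_zero[simp]: "Dz (\<lambda>_. 0) = (\<lambda>_. 0)"
  by (rule ext) (simp add: Dz_def Let_def)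

lemma negDz_zero[simp]: "negDz n (\<lambda>_. 0) = (\<lambda>_. 0)"
  by (induction n) (simp_all add: negDz_def)

lemma negDz_0[simp]: "negDz 0 F = F"
  by (simp add: negDz_def)

lemma pmul_zero1[simp]: "pmul (\<lambda>_. 0) G M = 0"
  by (simp add: pmul_def)

lemma pmul_zero2[simp]: "pmul F (\<lambda>_. 0) M = 0"
  by (simp add: pmul_def)

lemma pd_lft0: "pd (0, c, 0) (lft S) = lft (pdp c S)"
proof (rule ext)
  fix N
  show "pd (0, c, 0) (lft S) N = lft (pdp c S) N"
    by (simp add: pd_def lft_def pdp_def count_prj prj_def)
qed

lemma pd_lftSuc: "pd (Suc j, c, 0) (lft S) = (\<lambda>_. 0)"
  by (rule ext) (simp add: pd_def lft_def)

lemma Dz_lft: "Dz (lft S) M = lft1 (\<lambda>c. pdp c S) M"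
proof (cases "\<exists>c M0. M = add_mset (1,c,0) M0 \<and> allx M0")
  case True
  then obtain c M0 where M: "M = add_mset (1,c,0) M0" and a: "allx M0" by blast
  have set: "{w\<in>set_mset M. 0 < fst w} = {(1,c,0)}" using a M by (auto simp: allx_def)
  have "Dz (lft S) M = of_nat (count (add_mset (0,c,0) M0) (0,c,0)) * lft S (add_mset (0,c,0) M0)"
    unfolding Dz_def set using M by (simp add: Let_def)
  also have "\<dots> = pdp c S (image_mset prj M0)" using a by (simp add: lft_def pdp_def count_prj prj_def)
  also have "\<dots> = lft1 (\<lambda>c. pdp c S) M" unfolding M by (rule lft1_eq[OF a, symmetric])
  finally show ?thesis .
next
  case False
  have "\<forall>w\<in>{w\<in>set_mset M. 0 < fst w}. (let v = (fst w - 1, snd w); N = add_mset v (M - {#w#})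
      in of_nat (count N v) * lft S N) = 0"
  proof
    fix w assume w: "w \<in> {w\<in>set_mset M. 0 < fst w}"
    show "(let v = (fst w - 1, snd w); N = add_mset v (M - {#w#})
      in of_nat (count N v) * lft S N) = 0"
    proof (rule ccontr)
      assume nz: "(let v = (fst w - 1, snd w); N = add_mset v (M - {#w#})
      in of_nat (count N v) * lft S N) \<noteq> 0"
      then have ax: "allx (add_mset (fst w - 1, snd w) (M - {#w#}))"
        by (auto simp: Let_def lft_def split: if_splits)
      then have "w = (1, fst (snd w), 0)" using w by (cases w) auto
      moreover have "M = add_mset w (M - {#w#})" using w by simp
      ultimately show False using False ax by (metis allx_add)
    qed
  qed
  then have "Dz (lft S) M = 0" unfolding Dz_def by (rule sum.neutral)
  then show ?thesis using False lft1_zero by metis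
qed

definition gx :: "'i \<times> nat \<Rightarrow> nat \<times> 'i \<times> nat" where
  "gx y = (0, fst y, 0)"

lemma gx_prj: "allx N \<Longrightarrow> image_mset gx (image_mset prj N) = N"
  by (induction N) (auto simp: gx_def prj_def prod_eq_iff)

lemma prj_gx: "(\<forall>y\<in>#K. snd y = 0) \<Longrightarrow> image_mset prj (image_mset gx K) = K"
  by (induction K) (auto simp: gx_def prj_def prod_eq_iff)

lemma pmul_lft_lft1: "pmul (lft F) (lft1 T) M = lft1 (\<lambda>c. pmul F (T c)) M"
proof (cases "\<exists>c M0. M = add_mset (1,c,0) M0 \<and> allx M0")
  case True
  then obtain c M0 where M: "M = add_mset (1,c,0) M0" and a: "allx M0" by blast
  have "pmul (lft F) (lft1 T) M = (\<Sum>N\<in>{N. N \<subseteq># M0}. lft F N * lft1 T (M - N))"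
    unfolding pmul_def
  proof (rule sum.mono_neutral_right)
    show "finite {N. N \<subseteq># M}" by (rule finite_submsets)
    have M0M: "M0 \<subseteq># M" unfolding M by (metis add_mset_add_single mset_subset_eq_add_left)
    show "{N. N \<subseteq># M0} \<subseteq> {N. N \<subseteq># M}"
    proof
      fix N assume "N \<in> {N. N \<subseteq># M0}"
      then show "N \<in> {N. N \<subseteq># M}" using M0M subset_mset.order_trans by blast
    qed
    show "\<forall>i\<in>{N. N \<subseteq># M} - {N. N \<subseteq># M0}. lft F i * lft1 T (M - i) = 0"
    proof
      fix N assume "N \<in> {N. N \<subseteq># M} - {N. N \<subseteq># M0}"
      then have "N \<subseteq># add_mset (1,c,0) M0" "\<not> N \<subseteq># M0" using M by auto
      then have "(1,c,0) \<in># N" by (metis Diff_eq_empty_iff_mset minus_add_mset_if_not_in_lhs)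
      then have "\<not> allx N"
      proof (intro notI)
        assume "allx N" "(1,c,0) \<in># N"
        then have "fst (1::nat,c,0::nat) = 0" unfolding allx_def by blast
        then show False by simp
      qed
      then show "lft F N * lft1 T (M - N) = 0" by (simp add: lft_def)
    qed
  qed
  also have "\<dots> = (\<Sum>N\<in>{N. N \<subseteq># M0}. F (image_mset prj N) * T c (image_mset prj M0 - image_mset prj N))"
  proof (rule sum.cong)
    fix N assume "N \<in> {N. N \<subseteq># M0}"
    then have N: "N \<subseteq># M0" by simp
    have aN: "allx N" using a N allx_sub by blast
    have aD: "allx (M0 - N)" using a allx_sub by (metis diff_subset_eq_self)
    have "M - N = add_mset (1,c,0) (M0 - N)" using M N
      by (metis add_mset_add_single subset_mset.diff_add_assoc2)
    then show "lft F N * lft1 T (M - N) = F (image_mset prj N) * T c (image_mset prj M0 - image_mset prj N)"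
      using aN aD N by (simp add: lft_def lft1_eq image_mset_Diff)
  qed simp
  also have "\<dots> = (\<Sum>K\<in>{K. K \<subseteq># image_mset prj M0}. F K * T c (image_mset prj M0 - K))"
  proof (rule sum.reindex_bij_witness[of _ "image_mset gx" "image_mset prj"])
    fix N assume "N \<in> {N. N \<subseteq># M0}"
    then have N: "N \<subseteq># M0" by simp
    have aN: "allx N" using a N allx_sub by blast
    show "image_mset gx (image_mset prj N) = N" using aN by (rule gx_prj)
    show "image_mset prj N \<in> {K. K \<subseteq># image_mset prj M0}" using N
      by (simp add: image_mset_subseteq_mono)
    show "F (image_mset prj N) * T c (image_mset prj M0 - image_mset prj N) =
          F (image_mset prj N) * T c (image_mset prj M0 - image_mset prj N)" by simp
  next
    fix K assume "K \<in> {K. K \<subseteq># image_mset prj M0}"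
    then have K: "K \<subseteq># image_mset prj M0" by (simp only: mem_Collect_eq)
    have "\<forall>y\<in>#K. snd y = 0"
    proof (intro ballI)
      fix y assume "y \<in># K"
      then have "y \<in># image_mset prj M0" by (rule mset_subset_eqD[OF K])
      then show "snd y = 0" by (auto simp: prj_def)
    qed
    then show "image_mset prj (image_mset gx K) = K" by (rule prj_gx)
    have "image_mset gx K \<subseteq># image_mset gx (image_mset prj M0)" using K
      by (rule image_mset_subseteq_mono)
    then show "image_mset gx K \<in> {N. N \<subseteq># M0}" using gx_prj[OF a] by simp
  qed
  also have "\<dots> = lft1 (\<lambda>c. pmul F (T c)) M"
    unfolding M lft1_eq[OF a] pmul_def ..
  finally show ?thesis .
next
  case False
  have "\<forall>N\<in>{N. N \<subseteq># M}. lft F N * lft1 T (M - N) = 0"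
  proof
    fix N assume "N \<in> {N. N \<subseteq># M}"
    then have N: "N \<subseteq># M" by simp
    show "lft F N * lft1 T (M - N) = 0"
    proof (rule ccontr)
      assume nz: "lft F N * lft1 T (M - N) \<noteq> 0"
      then have aN: "allx N" by (auto simp: lft_def split: if_splits)
      from nz have "lft1 T (M - N) \<noteq> 0" by auto
      then obtain c M1 where M1: "M - N = add_mset (1,c,0) M1" "allx M1" using lft1_nz by blast
      have "M = N + (M - N)" using N by (simp add: subset_mset.add_diff_inverse)
      then have "M = add_mset (1,c,0) (N + M1)" using M1 by simp
      moreover have "allx (N + M1)" using aN M1(2) by simp
      ultimately show False using False by blast
    qed
  qed
  then have "pmul (lft F) (lft1 T) M = 0" unfolding pmul_def by (rule sum.neutral)
  then show ?thesis using lft1_zero[OF False] by simp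
qed

lemma Gser_lft: "Gser corr k a = lft (gen corr {#(a,k)#})"
proof (rule ext)
  fix M
  show "Gser corr k a M = lft (gen corr {#(a,k)#}) M"
  proof (cases "allx M")
    case True
    have "Gser corr k a M = corr (add_mset (a,k) (image_mset prj M)) / mfact M"
      using True unfolding Gser_def allx_def[symmetric] prj_def[abs_def] by simp
    also have "\<dots> = lft (gen corr {#(a,k)#}) M"
      using True by (simp add: lft_def gen_def mfact_prj)
    finally show ?thesis .
  next
    case False
    have "\<not> (\<forall>x\<in>#M. fst x = 0 \<and> snd (snd x) = 0)" using False unfolding allx_def by auto
    then show ?thesis unfolding Gser_def lft_def allx_def[symmetric] using False by simp
  qed
qed

lemma canc: "(a::complex) \<noteq> 0 \<Longrightarrow> a * (x / (a * b)) = x / b"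
  by (metis mult_divide_mult_cancel_left times_divide_eq_right)

lemma pdp_gen:
  fixes corr :: "('i \<times> nat) multiset \<Rightarrow> complex"
  shows "pdp c (gen corr X) = gen corr (add_mset (c,0) X)"
proof (rule ext)
  fix K :: "('i \<times> nat) multiset"
  have nz: "(of_nat (count K (c,0) + 1) :: complex) \<noteq> 0" by (metis of_nat_eq_0_iff add_eq_0_iff_both_eq_0 one_neq_zero)
  show "pdp c (gen corr X) K = gen corr (add_mset (c,0) X) K"
    unfolding pdp_def gen_def mfact_add canc[OF nz] by (simp add: add_ac)
qed

lemma sum_only0: "(\<And>k. k \<noteq> 0 \<Longrightarrow> f k = 0) \<Longrightarrow> sum f {..(n::nat)} = f 0"
proof -
  assume h: "\<And>k. k \<noteq> 0 \<Longrightarrow> f k = 0"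
  have "sum f {..n} = sum f {0}"
    by (rule sum.mono_neutral_right) (auto simp: h)
  then show ?thesis by simp
qed

lemma inv_sym:
  fixes A :: "complex^'n^'n"
  assumes "invertible A" "transpose A = A"
  shows "transpose (matrix_inv A) = matrix_inv A"
proof -
  let ?B = "matrix_inv A"
  have ex: "\<exists>A'. A ** A' = mat 1 \<and> A' ** A = mat 1" using assms(1) unfolding invertible_def by blast
  have AB: "A ** ?B = mat 1 \<and> ?B ** A = mat 1" unfolding matrix_inv_def by (rule someI_ex[OF ex])
  have "transpose ?B ** A = transpose ?B ** transpose A" using assms(2) by simp
  also have "\<dots> = transpose (A ** ?B)" by (simp add: matrix_transpose_mul)
  also have "\<dots> = mat 1" using AB by simp
  finally have tB: "transpose ?B ** A = mat 1" .
  have "transpose ?B = transpose ?B ** (A ** ?B)" using AB by (simp add: matrix_mul_rid)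
  also have "\<dots> = (transpose ?B ** A) ** ?B" by (simp add: matrix_mul_assoc)
  also have "\<dots> = ?B" using tB by (simp add: matrix_mul_lid)
  finally show ?thesis .
qed


lemma sum_only0S: "(\<And>j. f (Suc j) = 0) \<Longrightarrow> sum f {..(n::nat)} = f 0"
  by (rule sum_only0) (metis not0_implies_Suc)

lemma Dz_lft': "Dz (lft S) = lft1 (\<lambda>c. pdp c S)"
  by (rule ext) (rule Dz_lft)

theorem mainTheorem8:
  fixes corr :: "('i::finite \<times> nat) multiset \<Rightarrow> complex" and P :: 'i
    and k m :: nat and a b :: 'i
  assumes "\<forall>X. size X < 3 \<longrightarrow> corr X = 0"
    and "invertible (metric corr P)"
    and "TRR corr P"
  shows "current_vanishes (cbracket (metric_inv corr P) (Gser corr k a) (Gser corr m b))"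
proof -
  let ?gi = "metric_inv corr P"
  have tm: "transpose (metric corr P) = metric corr P"
    by (simp add: metric_def transpose_def vec_eq_iff add_mset_commute)
  have sym: "?gi $ s $ t = ?gi $ t $ s" for s t
  proof -
    have "transpose ?gi = ?gi" unfolding metric_inv_def using inv_sym[OF assms(2) tm] .
    then have "transpose ?gi $ s $ t = ?gi $ s $ t" by simp
    then show ?thesis by (simp add: transpose_def)
  qed
  define H where "H = lft (gen corr {#(a, Suc k), (b, m)#})"
  have br: "cbracket ?gi (Gser corr k a) (Gser corr m b) M =
     (\<Sum>a'\<in>UNIV. \<Sum>b'\<in>UNIV. ?gi $ a' $ b' *
        lft1 (\<lambda>c. pmul (gen corr (add_mset (a',0) {#(a,k)#})) (gen corr (add_mset (c,0) (add_mset (b',0) {#(b,m)#})))) M)"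
    for M
    unfolding cbracket_def Gser_lft
    by (simp add: sum_only0S pd_lftSuc pd_lft0 Dz_lft' pmul_lft_lft1 pdp_gen)
  have dh: "Dz H M = lft1 (\<lambda>c. gen corr (add_mset (c,0) {#(a, Suc k), (b, m)#})) M" for M
    unfolding H_def Dz_lft pdp_gen ..
  have eq: "cbracket ?gi (Gser corr k a) (Gser corr m b) M = Dz H M" for M
  proof (cases "\<exists>c M0. M = add_mset (1,c,0) M0 \<and> allx M0")
    case True
    then obtain c M0 where M: "M = add_mset (1,c,0) M0" and a0: "allx M0" by blast
    let ?K = "image_mset prj M0"
    let ?X = "\<lambda>t s. pmul (gen corr {#(a,k),(t,0)#}) (gen corr {#(s,0),(b,m),(c,0)#}) ?K"
    have "Dz H M = gen corr {#(a, Suc k), (b, m), (c, 0)#} ?K"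
      unfolding dh M lft1_eq[OF a0] by (simp add: add_mset_commute)
    also have "\<dots> = (\<Sum>s\<in>UNIV. \<Sum>t\<in>UNIV. ?gi $ s $ t * ?X t s)"
      using assms(3) unfolding TRR_def by blast
    also have "\<dots> = (\<Sum>s\<in>UNIV. \<Sum>t\<in>UNIV. ?gi $ t $ s * ?X t s)"
      using sym by simp
    also have "\<dots> = (\<Sum>t\<in>UNIV. \<Sum>s\<in>UNIV. ?gi $ t $ s * ?X t s)"
      by (rule sum.swap)
    also have "\<dots> = cbracket ?gi (Gser corr k a) (Gser corr m b) M"
      unfolding br M lft1_eq[OF a0] by (simp add: add_mset_commute)
    finally show ?thesis by simp
  next
    case False
    show ?thesis unfolding br dh lft1_zero[OF False] by simp
  qed
  show ?thesis unfolding current_vanishes_def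
    by (rule exI[of _ H]) (rule ext, rule eq)
qed

end
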